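(* Assume $N,L\to\infty$ with $N/L\to0$, $d=d(L)\to0$, $dL\to\infty$ and $N/(dL)\to\gamma\in[0,\infty)$. Then for every $n\in\mathbb N$, $$\lim\ \pi_{L,N}[\tilde\eta_1=n]=\frac{\gamma^{n-1}}{(1+\gamma)^n},$$ i.e. the law of $\tilde\eta_1$ under $\pi_{L,N}$ converges to the geometric distribution on $\{1,2,\dots\}$ with success parameter $\frac1{1+\gamma}$ (for $\gamma=0$, the point mass at $1$).
   Context: Inclusion process: $\Omega_{L,N}=\{\eta\in\mathbb N_0^L:\sum_x\eta_x=N\}$, generator $\mathfrak L_{L,N}f(\eta)=\sum_{x\ne y}\eta_x(d+\eta_y)[f(\eta^{x,y})-f(\eta)]$, $\eta^{x,y}=\eta-e^x+e^y$. For $d>0$ its unique invariant distribution is $\pi_{L,N}[\eta]=\frac1{Z_{L,N}}\prod_{x=1}^Lw_L(\eta_x)$ with $w_L(n)=\frac{\Gamma(n+d)}{n!\,\Gamma(d)}$ and $Z_{L,N}=\frac{\Gamma(N+dL)}{N!\,\Gamma(dL)}$. Size-biased marginal: given $\eta$, choose a site $x$ with probability $\eta_x/N$ and set $\tilde\eta_1=\eta_x$; $\pi_{L,N}[\tilde\eta_1=n]$ denotes the probability of this event when $\eta\sim\pi_{L,N}$, i.e. $\pi_{L,N}[\tilde\eta_1=n]=\frac LNn\,w_L(n)\frac{Z_{L-1,N-n}}{Z_{L,N}}$. *)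

theory Defs
  imports "HOL-Analysis.Analysis"
begin

definition ip_w :: "real \<Rightarrow> nat \<Rightarrow> real" where
  "ip_w d n = Gamma (real n + d) / (fact n * Gamma d)"

definition ip_Z :: "real \<Rightarrow> nat \<Rightarrow> nat \<Rightarrow> real" where
  "ip_Z d L N = Gamma (real N + d * real L) / (fact N * Gamma (d * real L))"

text \<open>Size-biased marginal pi_{L,N}[tilde eta_1 = n] = (L/N) n w_L(n) Z_{L-1,N-n} / Z_{L,N};
  it is 0 when n > N (no site can carry more than N particles).\<close>
definition ip_sizebiased :: "real \<Rightarrow> nat \<Rightarrow> nat \<Rightarrow> nat \<Rightarrow> real" where
  "ip_sizebiased d L N n =
     (if n \<le> N then (real L / real N) * real n * ip_w d n * ip_Z d (L - 1) (N - n) / ip_Z d L N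
      else 0)"

end

theory Submission
  imports Defs
begin


lemma Gamma_plus1_real: "(y::real) > 0 \<Longrightarrow> Gamma (y + 1) = y * Gamma y"
  by (rule Gamma_plus1) (auto elim!: nonpos_Ints_cases)

lemma gamma_upper:
  fixes y s :: real assumes y: "y > 0" and s: "0 \<le> s" "s \<le> 1"
  shows "Gamma (y + s) \<le> Gamma y * y powr s"
proof -
  have g: "Gamma y \<noteq> 0" using y by (metis Gamma_real_pos less_irrefl)
  have g2: "Gamma (y+s) \<noteq> 0" using y s by (metis Gamma_real_pos less_irrefl add_pos_nonneg)
  have "(ln \<circ> Gamma) ((1 - s) *\<^sub>R y + s *\<^sub>R (y+1)) \<le> (1 - s) * (ln \<circ> Gamma) y + s * (ln \<circ> Gamma) (y+1)"
    by (rule convex_onD[OF log_convex_Gamma_real]) (use y s in auto)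
  moreover have "(1 - s) *\<^sub>R y + s *\<^sub>R (y+1) = y + s" by (simp add: algebra_simps)
  moreover have "ln (Gamma (y+1)) = ln y + ln (Gamma y)"
    using y by (simp add: Gamma_plus1_real ln_mult g)
  ultimately have "ln (Gamma (y+s)) \<le> ln (Gamma y) + s * ln y" by (simp add: algebra_simps)
  also have "\<dots> = ln (Gamma y * y powr s)" using y by (simp add: ln_mult ln_powr g)
  finally show ?thesis using y s by (subst (asm) ln_le_cancel_iff) auto
qed

lemma gamma_lower:
  fixes y s :: real assumes y: "y > 0" and s: "0 \<le> s" "s \<le> 1"
  shows "y * Gamma y \<le> Gamma (y + s) * (y + s) powr (1 - s)"
proof -
  have g: "Gamma y \<noteq> 0" using y by (metis Gamma_real_pos less_irrefl)
  have g2: "Gamma (y+s) \<noteq> 0" using y s by (metis Gamma_real_pos less_irrefl add_pos_nonneg)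
  have "(ln \<circ> Gamma) ((1 - (1-s)) *\<^sub>R (y+s) + (1-s) *\<^sub>R (y+s+1)) \<le> (1 - (1-s)) * (ln \<circ> Gamma) (y+s) + (1-s) * (ln \<circ> Gamma) (y+s+1)"
    by (rule convex_onD[OF log_convex_Gamma_real]) (use y s in auto)
  moreover have "(1 - (1-s)) *\<^sub>R (y+s) + (1-s) *\<^sub>R (y+s+1) = y + 1" by (simp add: algebra_simps)
  moreover have "ln (Gamma (y+1)) = ln y + ln (Gamma y)"
    using y by (simp add: Gamma_plus1_real ln_mult g)
  moreover have "ln (Gamma (y+s+1)) = ln (y+s) + ln (Gamma (y+s))"
    using y s by (simp add: Gamma_plus1_real ln_mult g2)
  ultimately have "ln (y * Gamma y) \<le> ln (Gamma (y+s)) + (1-s) * ln (y+s)"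
    using y g by (simp add: algebra_simps ln_mult)
  also have "\<dots> = ln (Gamma (y + s) * (y + s) powr (1 - s))" using y s by (simp add: ln_mult ln_powr g2)
  finally show ?thesis using y s by (subst (asm) ln_le_cancel_iff) auto
qed

lemma Gamma_shift: "(x::real) > 0 \<Longrightarrow> Gamma (x + real n) = Gamma x * (\<Prod>j<n. (x + real j))"
proof (induction n)
  case 0 then show ?case by simp
next
  case (Suc n)
  have "Gamma (x + real (Suc n)) = Gamma ((x + real n) + 1)" by (simp add: algebra_simps)
  also have "\<dots> = (x + real n) * Gamma (x + real n)" using Suc.prems by (intro Gamma_plus1_real) auto
  finally show ?case using Suc by (simp add: algebra_simps)
qed

lemma fact_split: "n \<le> M \<Longrightarrow> (fact M :: real) = fact (M - n) * (\<Prod>j<n. (real M - real j))"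
proof (induction n)
  case 0 then show ?case by simp
next
  case (Suc n)
  then have "fact (M - n) = (real M - real n) * (fact (M - Suc n) :: real)"
    by (metis Suc_diff_Suc Suc_le_lessD fact_Suc of_nat_diff less_imp_le_nat diff_Suc_Suc mult.commute of_nat_Suc le_SucI diff_diff_left)
  have "(fact M :: real) = fact (M - n) * (\<Prod>j<n. (real M - real j))" using Suc by simp
  also have "\<dots> = fact (M - Suc n) * ((\<Prod>j<n. (real M - real j)) * (real M - real n))"
    by (subst \<open>fact (M - n) = _\<close>) (simp add: algebra_simps)
  finally show ?case by simp
qed

lemma R_bounds:
  fixes D a b :: real assumes D: "0<D" "D<1" and a: "D<a" and b: "D<b"
  shows "(a-D)/a * (a/(b-D)) powr D \<le> Gamma a / Gamma (a-D) * (Gamma (b-D) / Gamma b)"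
    and "Gamma a / Gamma (a-D) * (Gamma (b-D) / Gamma b) \<le> ((a-D)/b) powr D * (b/(b-D))"
proof -
  have a0: "a > 0" "a - D > 0" and b0: "b > 0" "b - D > 0" using D a b by auto
  have Ga: "Gamma a > 0" "Gamma (a-D) > 0" "Gamma b > 0" "Gamma (b-D) > 0"
    using a0 b0 by auto
  have u1: "Gamma a \<le> Gamma (a-D) * (a-D) powr D"
    using gamma_upper[of "a-D" D] a0 D by simp
  have l1: "(a-D) * Gamma (a-D) \<le> Gamma a * a powr (1-D)"
    using gamma_lower[of "a-D" D] a0 D by simp
  have u2: "Gamma b \<le> Gamma (b-D) * (b-D) powr D"
    using gamma_upper[of "b-D" D] b0 D by simp
  have l2: "(b-D) * Gamma (b-D) \<le> Gamma b * b powr (1-D)"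
    using gamma_lower[of "b-D" D] b0 D by simp
  have pa: "a powr (1-D) = a / a powr D" using a0 by (simp add: powr_diff)
  have pb: "b powr (1-D) = b / b powr D" using b0 by (simp add: powr_diff)
  have pa': "a powr D > 0" "(a-D) powr D > 0" "b powr D > 0" "(b-D) powr D > 0" using a0 b0 by auto
  have A1: "(a-D) * a powr D / a \<le> Gamma a / Gamma (a-D)"
    using l1 Ga pa pa' a0 by (simp add: field_simps)
  have B1: "1 / (b-D) powr D \<le> Gamma (b-D) / Gamma b"
    using u2 Ga pa' by (simp add: field_simps)
  have "(a-D) * a powr D / a * (1 / (b-D) powr D) \<le> Gamma a / Gamma (a-D) * (Gamma (b-D) / Gamma b)"
    by (rule mult_mono[OF A1 B1]) (use Ga a0 pa' in auto)
  moreover have "(a-D)/a * (a/(b-D)) powr D = (a-D) * a powr D / a * (1 / (b-D) powr D)"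
    using a0 b0 by (simp add: powr_divide)
  ultimately show "(a-D)/a * (a/(b-D)) powr D \<le> Gamma a / Gamma (a-D) * (Gamma (b-D) / Gamma b)" by simp
  have A2: "Gamma a / Gamma (a-D) \<le> (a-D) powr D"
    using u1 Ga by (simp add: field_simps)
  have B2: "Gamma (b-D) / Gamma b \<le> b / b powr D / (b-D)"
    using l2 Ga pb pa' b0 by (simp add: field_simps)
  have "Gamma a / Gamma (a-D) * (Gamma (b-D) / Gamma b) \<le> (a-D) powr D * (b / b powr D / (b-D))"
    by (rule mult_mono[OF A2 B2]) (use Ga pa' in auto)
  moreover have "((a-D)/b) powr D * (b/(b-D)) = (a-D) powr D * (b / b powr D / (b-D))"
    using a0 b0 by (simp add: powr_divide)
  ultimately show "Gamma a / Gamma (a-D) * (Gamma (b-D) / Gamma b) \<le> ((a-D)/b) powr D * (b/(b-D))" by simp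
qed



lemma main_identity:
  fixes D :: real and l M m :: nat
  defines "a \<equiv> D * real l" and "b \<equiv> real M + D * real l - real (Suc m)"
  assumes D: "0 < D" "D < 1" and a: "a > real (Suc m) + 1" and M: "Suc m \<le> M"
  shows "ip_sizebiased D l M (Suc m) =
    (Gamma (real (Suc m) + D) / Gamma (D + 1) / fact m) *
    (a / b * (\<Prod>j<m. (real M - real (Suc j)) / (b + real (Suc j)))) *
    (Gamma a / Gamma (a - D) * (Gamma (b - D) / Gamma b))"
proof -
  have l1: "l \<ge> 1" using a D unfolding a_def by (cases l) auto
  have b0: "b > D" using a M D unfolding a_def b_def by auto
  have a0: "a > D" using a D by auto
  have e1: "D * real (l - 1) = a - D" using l1 unfolding a_def by (simp add: of_nat_diff algebra_simps)
  have e2: "real (M - Suc m) + (a - D) = b - D" using M unfolding a_def b_def by (simp add: of_nat_diff)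
  have e3: "real M + D * real l = b + real (Suc m)" unfolding b_def by simp
  have GM: "Gamma (b + real (Suc m)) = Gamma b * (\<Prod>j<Suc m. (b + real j))"
    using Gamma_shift[of b "Suc m"] b0 D by simp
  have fM: "(fact M :: real) = fact (M - Suc m) * (\<Prod>j<Suc m. (real M - real j))"
    using fact_split[OF M] .
  have GD: "Gamma (D + 1) = D * Gamma D" using Gamma_plus1_real D by simp
  have p1: "(\<Prod>j<Suc m. (b + real j)) = b * (\<Prod>j<m. (b + real (Suc j)))"
    by (subst prod.lessThan_Suc_shift) simp
  have p2: "(\<Prod>j<Suc m. (real M - real j)) = real M * (\<Prod>j<m. (real M - real (Suc j)))"
    by (subst prod.lessThan_Suc_shift) simp
  have p3: "(\<Prod>j<m. (real M - real (Suc j)) / (b + real (Suc j))) =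
      (\<Prod>j<m. (real M - real (Suc j))) / (\<Prod>j<m. (b + real (Suc j)))"
    by (rule prod_dividef)
  have pos: "Gamma a > 0" "Gamma (a - D) > 0" "Gamma b > 0" "Gamma (b-D) > 0" "Gamma D > 0"
    "Gamma (D+1) > 0" "b > 0" "real M > 0"
    using a0 b0 D M by auto
  have pp: "(\<Prod>j<m. (b + real (Suc j))) > 0" using b0 D by (intro prod_pos) auto
  have ff: "(fact (Suc m) :: real) = real (Suc m) * fact m" by simp
  have aD: "real l = a / D" unfolding a_def using D by simp
  have fm: "(fact m :: real) > 0" by simp
  show ?thesis
    unfolding ip_sizebiased_def ip_w_def ip_Z_def
    using M
    apply (simp only: e1 e2 e3 GM fM p1 p2 p3 ff if_True)
    apply (simp only: aD GD)
    using pos pp fm D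
    apply (simp add: divide_simps del: of_nat_Suc)
    done
qed



theorem lemma4p1:
  fixes L N :: "nat \<Rightarrow> nat" and d :: "nat \<Rightarrow> real" and \<gamma> :: real and n :: nat
  assumes d_pos: "\<And>l. d l > 0"
    and L_inf: "filterlim L at_top sequentially"
    and N_inf: "filterlim N at_top sequentially"
    and N_over_L: "(\<lambda>k. real (N k) / real (L k)) \<longlonglongrightarrow> 0"
    and d_zero: "(d \<longlongrightarrow> 0) at_top"
    and dL_inf: "filterlim (\<lambda>l. d l * real l) at_top at_top"
    and gamma_nonneg: "\<gamma> \<ge> 0"
    and N_over_dL: "(\<lambda>k. real (N k) / (d (L k) * real (L k))) \<longlonglongrightarrow> \<gamma>"
    and n_pos: "n \<ge> 1"
  shows "(\<lambda>k. ip_sizebiased (d (L k)) (L k) (N k) n) \<longlonglongrightarrow> \<gamma> ^ (n - 1) / (1 + \<gamma>) ^ n"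
proof -
  obtain m where n: "n = Suc m" using n_pos by (cases n) auto
  define D where "D k = d (L k)" for k
  define a where "a k = D k * real (L k)" for k
  define M where "M k = real (N k)" for k
  define b where "b k = M k + a k - real (Suc m)" for k
  define t where "t k = M k / a k" for k
  define ia where "ia k = inverse (a k)" for k
  have hD: "D \<longlonglongrightarrow> 0" unfolding D_def using filterlim_compose[OF d_zero L_inf] by simp
  have ha: "filterlim a at_top sequentially"
    unfolding a_def D_def using filterlim_compose[OF dL_inf L_inf] by simp
  have hia: "ia \<longlonglongrightarrow> 0" unfolding ia_def by (rule tendsto_inverse_0_at_top[OF ha])
  have ht: "t \<longlonglongrightarrow> \<gamma>" unfolding t_def M_def a_def D_def using N_over_dL by simp
  have ev1: "eventually (\<lambda>k. D k < 1) sequentially" using hD by (rule order_tendstoD) simp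
  have ev2: "eventually (\<lambda>k. real (Suc m) + 2 \<le> a k) sequentially"
    using ha filterlim_at_top by blast
  have ev3: "eventually (\<lambda>k. Suc m \<le> N k) sequentially"
    using N_inf filterlim_at_top by blast
  have Dpos: "D k > 0" for k unfolding D_def using d_pos by simp
  have g1: "1 + \<gamma> > 0" using gamma_nonneg by simp
  note evall = eventually_conj[OF ev1 eventually_conj[OF ev2 ev3]]
  have hba: "(\<lambda>k. b k / a k) \<longlonglongrightarrow> 1 + \<gamma>"
  proof -
    have "(\<lambda>k. t k + 1 - real (Suc m) * ia k) \<longlonglongrightarrow> \<gamma> + 1 - real (Suc m) * 0"
      by (intro tendsto_intros ht hia)
    moreover have "eventually (\<lambda>k. t k + 1 - real (Suc m) * ia k = b k / a k) sequentially"
      using ev2 by eventually_elim (auto simp: t_def ia_def b_def field_simps)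
    ultimately show ?thesis by (simp add: tendsto_cong add.commute)
  qed
  have hMj: "(\<lambda>k. (M k - c) / a k) \<longlonglongrightarrow> \<gamma>" for c
  proof -
    have "(\<lambda>k. t k - c * ia k) \<longlonglongrightarrow> \<gamma> - c * 0"
      by (intro tendsto_intros ht hia)
    moreover have "eventually (\<lambda>k. t k - c * ia k = (M k - c) / a k) sequentially"
      using ev2 by eventually_elim (auto simp: t_def ia_def field_simps)
    ultimately show ?thesis by (simp add: tendsto_cong)
  qed
  have hbj: "(\<lambda>k. (b k + c) / a k) \<longlonglongrightarrow> 1 + \<gamma>" for c
  proof -
    have "(\<lambda>k. b k / a k + c * ia k) \<longlonglongrightarrow> (1 + \<gamma>) + c * 0"
      by (intro tendsto_intros hba hia)
    moreover have "eventually (\<lambda>k. b k / a k + c * ia k = (b k + c) / a k) sequentially"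
      using ev2 by eventually_elim (auto simp: ia_def field_simps)
    ultimately show ?thesis by (simp add: tendsto_cong)
  qed
  have hDa: "(\<lambda>k. D k / a k) \<longlonglongrightarrow> 0"
  proof -
    have "(\<lambda>k. D k * ia k) \<longlonglongrightarrow> 0 * 0" by (intro tendsto_intros hD hia)
    then show ?thesis by (simp add: ia_def divide_inverse)
  qed
  define F1 where "F1 k = Gamma (real (Suc m) + D k) / Gamma (D k + 1) / fact m" for k
  have hF1: "F1 \<longlonglongrightarrow> 1"
  proof -
    have c1: "isCont Gamma (real (Suc m) + 0)"
      by (rule isCont_Gamma[OF continuous_ident]) (auto elim!: nonpos_Ints_cases)
    have c2: "isCont Gamma (0 + 1 :: real)"
      by (rule isCont_Gamma[OF continuous_ident]) (auto elim!: nonpos_Ints_cases)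
    have "(\<lambda>k. Gamma (real (Suc m) + D k)) \<longlonglongrightarrow> Gamma (real (Suc m) + 0)"
      by (rule isCont_tendsto_compose[OF c1]) (intro tendsto_intros hD)
    moreover have "(\<lambda>k. Gamma (D k + 1)) \<longlonglongrightarrow> Gamma (0 + 1)"
      by (rule isCont_tendsto_compose[OF c2]) (intro tendsto_intros hD)
    ultimately have "F1 \<longlonglongrightarrow> Gamma (real (Suc m) + 0) / Gamma (0 + 1) / fact m"
      unfolding F1_def by (intro tendsto_divide tendsto_const) auto
    moreover have "Gamma (real (Suc m) + 0) = (fact m :: real)"
      using Gamma_fact[of m, where 'a=real] by (simp add: add.commute)
    ultimately show ?thesis by simp
  qed
  define F2 where "F2 k = a k / b k * (\<Prod>j<m. (M k - real (Suc j)) / (b k + real (Suc j)))" for k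
  have hF2: "F2 \<longlonglongrightarrow> 1 / (1 + \<gamma>) * (\<Prod>j<m. \<gamma> / (1 + \<gamma>))"
  proof -
    have "(\<lambda>k. 1 / (b k / a k) * (\<Prod>j<m. ((M k - real (Suc j)) / a k) / ((b k + real (Suc j)) / a k)))
       \<longlonglongrightarrow> 1 / (1 + \<gamma>) * (\<Prod>j<m. \<gamma> / (1 + \<gamma>))"
      using g1 by (intro tendsto_intros tendsto_prod hba hMj hbj) auto
    moreover have "eventually (\<lambda>k. 1 / (b k / a k) * (\<Prod>j<m. ((M k - real (Suc j)) / a k) / ((b k + real (Suc j)) / a k)) = F2 k) sequentially"
      using ev2
    proof eventually_elim
      case (elim k)
      then have "a k \<noteq> 0" by auto
      then have q: "(x / a k) / (y / a k) = x / y" for x y by (simp add: field_simps)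
      show ?case unfolding F2_def q using \<open>a k \<noteq> 0\<close> by (simp add: field_simps)
    qed
    ultimately show ?thesis by (simp add: tendsto_cong)
  qed
  define R where "R k = Gamma (a k) / Gamma (a k - D k) * (Gamma (b k - D k) / Gamma (b k))" for k
  define lo where "lo k = (a k - D k) / a k * (a k / (b k - D k)) powr D k" for k
  define hi where "hi k = ((a k - D k) / b k) powr D k * (b k / (b k - D k))" for k
  have hlo: "lo \<longlonglongrightarrow> 1"
  proof -
    have "(\<lambda>k. (1 - D k / a k) * (1 / (b k / a k - D k / a k)) powr D k) \<longlonglongrightarrow> (1 - 0) * (1 / (1 + \<gamma> - 0)) powr 0"
      using g1 by (intro tendsto_intros hba hDa hD) auto
    moreover have "eventually (\<lambda>k. (1 - D k / a k) * (1 / (b k / a k - D k / a k)) powr D k = lo k) sequentially"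
      using ev2
    proof eventually_elim
      case (elim k)
      then have "a k \<noteq> 0" by auto
      then show ?case unfolding lo_def by (simp add: field_simps)
    qed
    ultimately show ?thesis using g1 by (simp add: tendsto_cong)
  qed
  have hhi: "hi \<longlonglongrightarrow> 1"
  proof -
    have "(\<lambda>k. ((1 - D k / a k) / (b k / a k)) powr D k * ((b k / a k) / (b k / a k - D k / a k))) \<longlonglongrightarrow> ((1 - 0) / (1 + \<gamma>)) powr 0 * ((1 + \<gamma>) / (1 + \<gamma> - 0))"
      using g1 by (intro tendsto_intros hba hDa hD) auto
    moreover have "eventually (\<lambda>k. ((1 - D k / a k) / (b k / a k)) powr D k * ((b k / a k) / (b k / a k - D k / a k)) = hi k) sequentially"
      using ev2
    proof eventually_elim
      case (elim k)
      then have "a k \<noteq> 0" by auto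
      then have eqs: "(1 - D k / a k) / (b k / a k) = (a k - D k) / b k"
        "(b k / a k) / (b k / a k - D k / a k) = b k / (b k - D k)"
        using \<open>a k \<noteq> 0\<close> by (simp_all add: diff_divide_distrib[symmetric] diff_divide_eq_iff)
      show ?case unfolding hi_def eqs by (rule refl)
    qed
    ultimately show ?thesis using g1 by (simp add: tendsto_cong)
  qed
  have evb: "eventually (\<lambda>k. D k < 1 \<and> real (Suc m) + 2 \<le> a k \<and> Suc m \<le> N k) sequentially"
    using evall by simp
  have hR: "R \<longlonglongrightarrow> 1"
  proof (rule tendsto_sandwich[OF _ _ hlo hhi])
    show "eventually (\<lambda>k. lo k \<le> R k) sequentially" using evb
    proof eventually_elim
      case (elim k)
      have "D k < b k" using elim Dpos[of k] unfolding b_def M_def by auto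
      then show ?case unfolding lo_def R_def using R_bounds(1)[of "D k" "a k" "b k"] elim Dpos[of k] by auto
    qed
    show "eventually (\<lambda>k. R k \<le> hi k) sequentially" using evb
    proof eventually_elim
      case (elim k)
      have "D k < b k" using elim Dpos[of k] unfolding b_def M_def by auto
      then show ?case unfolding hi_def R_def using R_bounds(2)[of "D k" "a k" "b k"] elim Dpos[of k] by auto
    qed
  qed
  have "(\<lambda>k. F1 k * F2 k * R k) \<longlonglongrightarrow> 1 * (1 / (1 + \<gamma>) * (\<Prod>j<m. \<gamma> / (1 + \<gamma>))) * 1"
    by (intro tendsto_intros hF1 hF2 hR)
  moreover have "1 * (1 / (1 + \<gamma>) * (\<Prod>j<m. \<gamma> / (1 + \<gamma>))) * 1 = \<gamma> ^ (n - 1) / (1 + \<gamma>) ^ n"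
    using g1 n by (simp add: power_divide)
  moreover have "eventually (\<lambda>k. F1 k * F2 k * R k = ip_sizebiased (d (L k)) (L k) (N k) n) sequentially"
    using evb
  proof eventually_elim
    case (elim k)
    show ?case unfolding n F1_def F2_def R_def
      using main_identity[where D="D k" and l="L k" and M="N k" and m=m] elim Dpos[of k]
      unfolding a_def b_def M_def D_def by simp
  qed
  ultimately show ?thesis by (simp add: tendsto_cong)
qed

end
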